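(* Fix $n\in\mathbb N$, a diagonal matrix $D=\mathrm{diag}(d_1,\dots,d_n)$ with positive diagonal entries, and vectors $\mathbf v=(v_1,\dots,v_n)^\top$, $\mathbf c=(c_1,\dots,c_n)^\top\in\mathbb R^n$ such that $c_i\ne0$ for some $i\in\{1,\dots,n-1\}$. Set $\mathbf 1_A=1$ if $v_n-\frac{\mathbf c^\top D^{-1}\mathbf v}{\mathbf c^\top D^{-1}\mathbf c}c_n<0$ and $\mathbf 1_A=0$ otherwise, and define $$\lambda^*=\frac{\mathbf c^\top D^{-1}\mathbf v-c_nv_nd_n^{-1}\mathbf 1_A}{\mathbf c^\top D^{-1}\mathbf c-c_n^2d_n^{-1}\mathbf 1_A},\qquad\mu^*=(v_n-\lambda^*c_n)^-,\qquad\mathbf z^*=D^{-1}(\mathbf v-\lambda^*\mathbf c+\mu^*\mathbf e_n).$$ (a) $\mathbf z^*$ is the unique optimiser of the primal problem: minimise $\frac12\mathbf z^\top D\mathbf z-\mathbf v^\top\mathbf z$ subject to $\mathbf z\in\mathbb R^n$, $\mathbf c^\top\mathbf z=0$, $z_n\ge0$; and $\|\mathbf z^*\|\le d_{\min}^{-1}\|\mathbf v\|$, where $d_{\min}=\min(d_1,\dots,d_n)$. (b) $(\lambda^*,\mu^* )$ is the unique optimiser of the dual problem of this primal problem, which can be written as: maximise $-\frac12(\mathbf v-\lambda\mathbf c+\mu\mathbf e_n)^\top D^{-1}(\mathbf v-\lambda\mathbf c+\mu\mathbf e_n)$ subject to $\lambda\in\mathbb R$, $\mu\ge0$. Moreover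 $\|\lambda^*\mathbf c-\mu^*\mathbf e_n\|\le(1+\frac{d_{\max}}{d_{\min}})\|\mathbf v\|$, where $d_{\max}=\max(d_1,\dots,d_n)$. (c) The optimal values of the primal and dual problems coincide (no duality gap) and equal $-\frac12\mathbf v^\top\mathbf z^*$. (d) The triple satisfies $\mathbf z^*=\arg\min_{\mathbf z\in\mathbb R^n}L(\mathbf z,\lambda^*,\mu^* )$, $\mathbf c^\top\mathbf z^*=0$, $z^*_n\ge0$, $\mu^*\ge0$, $\mu^*z^*_n=0$, where $L$ is the Lagrangian of the primal problem; moreover $(\lambda^*,\mu^* )$ is a Lagrange multiplier for the primal problem.
   Context: $\mathbf e_n$ denotes the $n$-th unit vector, $\|\cdot\|$ the Euclidean norm, and $x^-=\max(-x,0)$. For a primal problem "minimise $f(\mathbf z)$ subject to $\mathbf z\in\mathbb R^n$, $h(\mathbf z)=0$, $g(\mathbf z)\le0$" with optimal value $f^*$, the Lagrangian is $L(\mathbf z,\lambda,\mu)=f(\mathbf z)+\lambda h(\mathbf z)+\mu g(\mathbf z)$; a pair $(\lambda^*,\mu^* )$ is a Lagrange multiplier if $f^*=\inf_{\mathbf z\in\mathbb R^n}L(\mathbf z,\lambda^*,\mu^* )$ and $\mu^*\ge0$; the dual problem is "maximise $q(\lambda,\mu)=\inf_{\mathbf z\in\mathbb R^n}L(\mathbf z,\lambda,\mu)$ subject to $\lambda\in\mathbb R$, $\mu\ge0$". Here $f(\mathbf z)=\frac12\mathbf z^\top D\mathbf z-\mathbf v^\top\mathbf z$, $h(\mathbf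 z)=\mathbf c^\top\mathbf z$, $g(\mathbf z)=-z_n$, so $L(\mathbf z,\lambda,\mu)=\frac12\mathbf z^\top D\mathbf z-\mathbf v^\top\mathbf z+\lambda\mathbf c^\top\mathbf z-\mu\mathbf e_n^\top\mathbf z$. *)

theory Defs
  imports Complex_Main
begin

text \<open>Vectors of R^n are represented as functions nat => real with coordinates
  indexed by 1..n and vanishing outside {1..n}.  The diagonal matrix D is
  represented by its diagonal d.\<close>

definition Rn :: "nat \<Rightarrow> (nat \<Rightarrow> real) set" where
  "Rn n = {z. \<forall>i. i \<notin> {1..n} \<longrightarrow> z i = 0}"

definition unitv :: "nat \<Rightarrow> nat \<Rightarrow> real" where
  "unitv n i = (if i = n then 1 else 0)"

definition dotp :: "nat \<Rightarrow> (nat \<Rightarrow> real) \<Rightarrow> (nat \<Rightarrow> real) \<Rightarrow> real" where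
  "dotp n x y = (\<Sum>i=1..n. x i * y i)"

definition vnorm :: "nat \<Rightarrow> (nat \<Rightarrow> real) \<Rightarrow> real" where
  "vnorm n x = sqrt (dotp n x x)"

definition quadD :: "nat \<Rightarrow> (nat \<Rightarrow> real) \<Rightarrow> (nat \<Rightarrow> real) \<Rightarrow> (nat \<Rightarrow> real) \<Rightarrow> real" where
  "quadD n d x y = (\<Sum>i=1..n. x i * d i * y i)"

definition quadDinv :: "nat \<Rightarrow> (nat \<Rightarrow> real) \<Rightarrow> (nat \<Rightarrow> real) \<Rightarrow> (nat \<Rightarrow> real) \<Rightarrow> real" where
  "quadDinv n d x y = (\<Sum>i=1..n. x i * y i / d i)"

definition negpart :: "real \<Rightarrow> real" where
  "negpart x = max (- x) 0"

definition objf :: "nat \<Rightarrow> (nat \<Rightarrow> real) \<Rightarrow> (nat \<Rightarrow> real) \<Rightarrow> (nat \<Rightarrow> real) \<Rightarrow> real" where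
  "objf n d v z = 1/2 * quadD n d z z - dotp n v z"

definition feasible :: "nat \<Rightarrow> (nat \<Rightarrow> real) \<Rightarrow> (nat \<Rightarrow> real) set" where
  "feasible n c = {z \<in> Rn n. dotp n c z = 0 \<and> z n \<ge> 0}"

definition lagr :: "nat \<Rightarrow> (nat \<Rightarrow> real) \<Rightarrow> (nat \<Rightarrow> real) \<Rightarrow> (nat \<Rightarrow> real) \<Rightarrow> (nat \<Rightarrow> real) \<Rightarrow> real \<Rightarrow> real \<Rightarrow> real" where
  "lagr n d v c z lam mu = objf n d v z + lam * dotp n c z - mu * dotp n (unitv n) z"

definition dualfun :: "nat \<Rightarrow> (nat \<Rightarrow> real) \<Rightarrow> (nat \<Rightarrow> real) \<Rightarrow> (nat \<Rightarrow> real) \<Rightarrow> real \<Rightarrow> real \<Rightarrow> real" where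
  "dualfun n d v c lam mu = (INF z\<in>Rn n. lagr n d v c z lam mu)"

definition primal_value :: "nat \<Rightarrow> (nat \<Rightarrow> real) \<Rightarrow> (nat \<Rightarrow> real) \<Rightarrow> (nat \<Rightarrow> real) \<Rightarrow> real" where
  "primal_value n d v c = (INF z\<in>feasible n c. objf n d v z)"

definition dual_value :: "nat \<Rightarrow> (nat \<Rightarrow> real) \<Rightarrow> (nat \<Rightarrow> real) \<Rightarrow> (nat \<Rightarrow> real) \<Rightarrow> real" where
  "dual_value n d v c = (SUP p\<in>{p :: real \<times> real. snd p \<ge> 0}. dualfun n d v c (fst p) (snd p))"

definition ind_A :: "nat \<Rightarrow> (nat \<Rightarrow> real) \<Rightarrow> (nat \<Rightarrow> real) \<Rightarrow> (nat \<Rightarrow> real) \<Rightarrow> real" where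
  "ind_A n d v c =
     (if v n - quadDinv n d c v / quadDinv n d c c * c n < 0 then 1 else 0)"

definition lam_star :: "nat \<Rightarrow> (nat \<Rightarrow> real) \<Rightarrow> (nat \<Rightarrow> real) \<Rightarrow> (nat \<Rightarrow> real) \<Rightarrow> real" where
  "lam_star n d v c =
     (quadDinv n d c v - c n * v n / d n * ind_A n d v c) /
     (quadDinv n d c c - (c n)^2 / d n * ind_A n d v c)"

definition mu_star :: "nat \<Rightarrow> (nat \<Rightarrow> real) \<Rightarrow> (nat \<Rightarrow> real) \<Rightarrow> (nat \<Rightarrow> real) \<Rightarrow> real" where
  "mu_star n d v c = negpart (v n - lam_star n d v c * c n)"

definition z_star :: "nat \<Rightarrow> (nat \<Rightarrow> real) \<Rightarrow> (nat \<Rightarrow> real) \<Rightarrow> (nat \<Rightarrow> real) \<Rightarrow> nat \<Rightarrow> real" where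
  "z_star n d v c i = (if i \<in> {1..n} then
     (v i - lam_star n d v c * c i + mu_star n d v c * unitv n i) / d i else 0)"

end

theory Submission
  imports Defs "HOL-Analysis.L2_Norm"
begin

lemma vnorm_L2: "vnorm n x = L2_set x {1..n}"
  by (simp add: vnorm_def dotp_def L2_set_def power2_eq_square)

lemma dot_unitv: "n \<ge> 1 \<Longrightarrow> dotp n (unitv n) z = z n"
proof -
  assume "n \<ge> 1"
  have "(\<Sum>i=1..n. unitv n i * z i) = (\<Sum>i=1..n. if i = n then z i else 0)"
    by (rule sum.cong) (auto simp: unitv_def)
  then show ?thesis using \<open>n \<ge> 1\<close> by (simp add: dotp_def)
qed

lemma qinv_unitv: "n \<ge> 1 \<Longrightarrow> quadDinv n d c (unitv n) = c n / d n"
proof -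
  assume "n \<ge> 1"
  have "(\<Sum>i=1..n. c i * unitv n i / d i) = (\<Sum>i=1..n. if i = n then c n / d n else 0)"
    by (rule sum.cong) (auto simp: unitv_def)
  then show ?thesis using \<open>n \<ge> 1\<close> by (simp add: quadDinv_def)
qed

lemma sq_nonneg3: "(d::real) > 0 \<Longrightarrow> 0 \<le> x * d * x"
proof -
  assume "d > 0"
  have "0 \<le> d * (x * x)" by (rule mult_nonneg_nonneg) (use \<open>d > 0\<close> in auto)
  then show ?thesis by (simp add: ac_simps)
qed

lemma sq_pos3: "(d::real) > 0 \<Longrightarrow> x \<noteq> 0 \<Longrightarrow> 0 < x * d * x"
proof -
  assume "d > 0" "x \<noteq> 0"
  have "x * d * x = d * (x * x)" by (simp add: ac_simps)
  moreover have "x * x > 0" using \<open>x \<noteq> 0\<close> by (cases "x > 0") (auto simp: mult_pos_pos mult_neg_neg)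
  ultimately show ?thesis using \<open>d > 0\<close> mult_pos_pos[of d "x*x"] by (simp add: ac_simps)
qed

lemma complete_sq:
  assumes dpos: "\<forall>i\<in>{1..n}. d i > 0"
  shows "1/2 * quadD n d z z - dotp n w z =
     -1/2 * quadDinv n d w w + 1/2 * quadD n d (\<lambda>i. z i - (if i \<in> {1..n} then w i / d i else 0))
                                              (\<lambda>i. z i - (if i \<in> {1..n} then w i / d i else 0))"
proof -
  have pt: "1/2*(z i*d i*z i) - w i*z i = -1/2*(w i*w i/d i)
      + 1/2*((z i - (if i \<in> {1..n} then w i / d i else 0))*d i*(z i - (if i \<in> {1..n} then w i / d i else 0)))"
    if "i \<in> {1..n}" for i
  proof -
    have "d i > 0" using dpos that by auto
    then show ?thesis using that by (simp add: field_simps)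
  qed
  have "1/2 * quadD n d z z - dotp n w z = (\<Sum>i=1..n. 1/2*(z i*d i*z i) - w i*z i)"
    by (simp add: quadD_def dotp_def sum_distrib_left sum_subtractf)
  also have "\<dots> = (\<Sum>i=1..n. -1/2*(w i*w i/d i)
      + 1/2*((z i - (if i \<in> {1..n} then w i / d i else 0))*d i*(z i - (if i \<in> {1..n} then w i / d i else 0))))"
    by (rule sum.cong[OF refl], rule pt)
  finally show ?thesis
    by (simp add: quadD_def quadDinv_def sum_distrib_left sum.distrib sum_subtractf sum_negf)
qed

lemma quadD_nonneg: "\<forall>i\<in>{1..n}. d i > 0 \<Longrightarrow> quadD n d x x \<ge> 0"
  unfolding quadD_def by (intro sum_nonneg) (simp add: sq_nonneg3)

lemma quadD_pos:
  assumes "\<forall>i\<in>{1..n}. d i > 0" "i \<in> {1..n}" "x i \<noteq> 0"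
  shows "quadD n d x x > 0"
  unfolding quadD_def
  by (rule sum_pos2[where i=i]) (use assms in \<open>auto simp: sq_pos3 sq_nonneg3\<close>)

lemma quadD_zero: "\<forall>i\<in>{1..n}. x i = 0 \<Longrightarrow> quadD n d x x = 0"
  unfolding quadD_def by simp

lemma lagr_eq: "lagr n d v c z lam mu = 1/2*quadD n d z z - dotp n (\<lambda>i. v i - lam*c i + mu*unitv n i) z"
  by (simp add: lagr_def objf_def dotp_def algebra_simps sum.distrib sum_subtractf sum_distrib_left)

lemma dualfun_eq:
  assumes dpos: "\<forall>i\<in>{1..n}. d i > 0"
  shows "dualfun n d v c lam mu = -1/2 * quadDinv n d (\<lambda>i. v i - lam*c i + mu*unitv n i) (\<lambda>i. v i - lam*c i + mu*unitv n i)"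
proof -
  define w where "w = (\<lambda>i. v i - lam*c i + mu*unitv n i)"
  define zw where "zw = (\<lambda>i. if i \<in> {1..n} then w i / d i else 0)"
  have L: "lagr n d v c z lam mu = -1/2 * quadDinv n d w w + 1/2 * quadD n d (\<lambda>i. z i - zw i) (\<lambda>i. z i - zw i)" for z
    unfolding lagr_eq w_def[symmetric] zw_def using complete_sq[OF dpos] by simp
  have zwR: "zw \<in> Rn n" by (simp add: Rn_def zw_def)
  show ?thesis unfolding dualfun_def w_def[symmetric]
  proof (rule cInf_eq_minimum)
    show "-1/2 * quadDinv n d w w \<in> (\<lambda>z. lagr n d v c z lam mu) ` Rn n"
      using zwR L[of zw] quadD_zero[of n "\<lambda>i. zw i - zw i" d] by force
    show "\<And>x. x \<in> (\<lambda>z. lagr n d v c z lam mu) ` Rn n \<Longrightarrow> -1/2 * quadDinv n d w w \<le> x"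
      using L quadD_nonneg[OF dpos] by fastforce
  qed
qed

theorem lemmaA1:
  fixes n :: nat and d v c :: "nat \<Rightarrow> real"
  assumes dpos: "\<forall>i\<in>{1..n}. d i > 0"
    and vRn: "v \<in> Rn n" and cRn: "c \<in> Rn n"
    and cnz: "\<exists>i\<in>{1..n-1}. c i \<noteq> 0"
  defines "lam \<equiv> lam_star n d v c" and "mu \<equiv> mu_star n d v c" and "zs \<equiv> z_star n d v c"
    and "dmin \<equiv> Min (d ` {1..n})" and "dmax \<equiv> Max (d ` {1..n})"
  shows
    \<comment> \<open>(a)\<close>
    "(zs \<in> feasible n c \<and>
      (\<forall>z\<in>feasible n c. z \<noteq> zs \<longrightarrow> objf n d v zs < objf n d v z) \<and>
      vnorm n zs \<le> vnorm n v / dmin)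
     \<comment> \<open>(b)\<close>
     \<and> (\<forall>lam' mu'. dualfun n d v c lam' mu' =
          - 1/2 * quadDinv n d (\<lambda>i. v i - lam' * c i + mu' * unitv n i)
                               (\<lambda>i. v i - lam' * c i + mu' * unitv n i))
     \<and> (mu \<ge> 0 \<and>
        (\<forall>lam' mu'. mu' \<ge> 0 \<and> (lam', mu') \<noteq> (lam, mu) \<longrightarrow>
           dualfun n d v c lam' mu' < dualfun n d v c lam mu) \<and>
        vnorm n (\<lambda>i. lam * c i - mu * unitv n i) \<le> (1 + dmax / dmin) * vnorm n v)
     \<comment> \<open>(c)\<close>
     \<and> primal_value n d v c = dual_value n d v c
     \<and> primal_value n d v c = - 1/2 * dotp n v zs
     \<comment> \<open>(d)\<close>
     \<and> (zs \<in> Rn n \<and> (\<forall>z\<in>Rn n. z \<noteq> zs \<longrightarrow> lagr n d v c zs lam mu < lagr n d v c z lam mu))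
     \<and> dotp n c zs = 0 \<and> zs n \<ge> 0 \<and> mu \<ge> 0 \<and> mu * zs n = 0
     \<and> (primal_value n d v c = dualfun n d v c lam mu \<and> mu \<ge> 0)"
proof -
  obtain i0 where i0: "i0 \<in> {1..n-1}" "c i0 \<noteq> 0" using cnz by blast
  have n1: "n \<ge> 1" and i0n: "i0 \<noteq> n" and i0R: "i0 \<in> {1..n}" using i0 by auto
  define w where "w = (\<lambda>i. v i - lam*c i + mu*unitv n i)"
  have zsw: "zs = (\<lambda>i. if i \<in> {1..n} then w i / d i else 0)"
    unfolding zs_def z_star_def w_def lam_def mu_def by (rule ext) simp
  have zsR: "zs \<in> Rn n" by (simp add: Rn_def zsw)
  have zsd: "d i * zs i = w i" if "i \<in> {1..n}" for i
  proof -
    have "d i > 0" using dpos that by blast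
    then show ?thesis using that by (simp add: zsw)
  qed
  define a where "a = quadDinv n d c c"
  define b where "b = quadDinv n d c v"
  have apos: "a > 0" unfolding a_def quadDinv_def
  proof (rule sum_pos2[where i=i0])
    show "0 < c i0 * c i0 / d i0" using i0 dpos i0R
      by (cases "c i0 > 0") (auto simp: mult_pos_pos mult_neg_neg)
  qed (use i0R dpos in \<open>auto intro!: divide_nonneg_pos\<close>)
  have a'pos: "a - (c n)^2 / d n > 0"
  proof -
    have "a = c n * c n / d n + (\<Sum>i\<in>{1..n}-{n}. c i * c i / d i)"
      unfolding a_def quadDinv_def using n1 by (subst sum.remove[of _ n]) auto
    moreover have "(\<Sum>i\<in>{1..n}-{n}. c i * c i / d i) > 0"
    proof (rule sum_pos2[where i=i0])
      show "0 < c i0 * c i0 / d i0" using i0 dpos i0R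
        by (cases "c i0 > 0") (auto simp: mult_pos_pos mult_neg_neg)
    qed (use i0R i0n dpos in \<open>auto intro!: divide_nonneg_pos\<close>)
    ultimately show ?thesis by (simp add: power2_eq_square)
  qed
  have dn: "d n > 0" using dpos n1 by auto
  have mu0: "mu \<ge> 0" unfolding mu_def mu_star_def negpart_def by simp
  have dotcz: "dotp n c zs = b - lam*a + mu*c n/d n"
  proof -
    have "dotp n c zs = (\<Sum>i=1..n. c i * v i / d i - lam * (c i * c i / d i) + mu * (c i * unitv n i / d i))"
      unfolding dotp_def zsw w_def by (rule sum.cong) (auto simp: algebra_simps add_divide_distrib diff_divide_distrib)
    also have "\<dots> = b - lam*a + mu * quadDinv n d c (unitv n)"
      by (simp add: a_def b_def quadDinv_def sum.distrib sum_subtractf sum_distrib_left)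
    finally show ?thesis using qinv_unitv[OF n1] by simp
  qed
  have zsn: "zs n = (v n - lam*c n + mu)/d n" using n1 by (simp add: zsw w_def unitv_def)
  have key: "dotp n c zs = 0 \<and> zs n \<ge> 0 \<and> mu * zs n = 0"
  proof (cases "v n - b/a * c n < 0")
    case False
    then have iA: "ind_A n d v c = 0" by (simp add: ind_A_def a_def b_def)
    have lamv: "lam = b/a" by (simp add: lam_def lam_star_def iA a_def b_def)
    have "v n - lam * c n \<ge> 0" using False lamv by simp
    then have mu00: "mu = 0" by (simp add: mu_def mu_star_def negpart_def lam_def)
    show ?thesis using apos dn \<open>v n - lam * c n \<ge> 0\<close> by (simp add: dotcz zsn mu00 lamv)
  next
    case True
    then have iA: "ind_A n d v c = 1" by (simp add: ind_A_def a_def b_def)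
    define a' where "a' = a - (c n)^2 / d n"
    have lamv: "lam = (b - c n * v n / d n) / a'"
      by (simp add: lam_def lam_star_def iA a_def b_def a'_def)
    have "(v n - lam * c n) * a' = a * (v n - b/a * c n)"
      using a'pos apos dn unfolding lamv a'_def by (simp add: field_simps power2_eq_square)
    moreover have "a * (v n - b/a * c n) < 0" using True apos by (simp add: mult_pos_neg)
    ultimately have neg: "v n - lam * c n < 0" using a'pos a'_def
      by (metis mult_less_0_iff not_less_iff_gr_or_eq)
    then have muv: "mu = lam * c n - v n" by (simp add: mu_def mu_star_def negpart_def lam_def)
    have "lam * a' = b - c n * v n / d n" using a'pos a'_def lamv by simp
    then show ?thesis using dn by (simp add: dotcz zsn muv a'_def field_simps power2_eq_square)
  qed
  have lagrL: "lagr n d v c z lam mu = -1/2 * quadDinv n d w w + 1/2 * quadD n d (\<lambda>i. z i - zs i) (\<lambda>i. z i - zs i)" for z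
    unfolding lagr_eq w_def[symmetric] zsw using complete_sq[OF dpos] by simp
  have lagrzs: "lagr n d v c zs lam mu = -1/2 * quadDinv n d w w"
    using lagrL[of zs] quadD_zero[of n "\<lambda>i. zs i - zs i" d] by simp
  have strictL: "lagr n d v c zs lam mu < lagr n d v c z lam mu" if "z \<in> Rn n" "z \<noteq> zs" for z
  proof -
    obtain i where "z i \<noteq> zs i" using \<open>z \<noteq> zs\<close> by blast
    then have "i \<in> {1..n}" using that zsR unfolding Rn_def by auto
    then have "quadD n d (\<lambda>i. z i - zs i) (\<lambda>i. z i - zs i) > 0"
      using quadD_pos[OF dpos] \<open>z i \<noteq> zs i\<close> by simp
    then show ?thesis using lagrL[of z] lagrzs by simp
  qed
  have objL: "objf n d v z = lagr n d v c z lam mu - lam * dotp n c z + mu * z n" for z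
    using dot_unitv[OF n1] by (simp add: lagr_def)
  have objzs: "objf n d v zs = lagr n d v c zs lam mu" using objL[of zs] key by simp
  have zsF: "zs \<in> feasible n c" using zsR key by (simp add: feasible_def)
  have primstrict: "objf n d v zs < objf n d v z" if "z \<in> feasible n c" "z \<noteq> zs" for z
  proof -
    have "z \<in> Rn n" "dotp n c z = 0" "z n \<ge> 0" using that by (auto simp: feasible_def)
    then have "objf n d v z \<ge> lagr n d v c z lam mu" using objL[of z] mu0 by simp
    then show ?thesis using strictL[OF \<open>z \<in> Rn n\<close> that(2)] objzs by simp
  qed
  have pv: "primal_value n d v c = objf n d v zs"
    unfolding primal_value_def
    by (rule cInf_eq_minimum) (use zsF primstrict in \<open>force+\<close>)
  have quadzs: "quadD n d zs zs = dotp n v zs"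
  proof -
    have "quadD n d zs zs = (\<Sum>i=1..n. v i * zs i - lam * (c i * zs i) + mu * (unitv n i * zs i))"
      unfolding quadD_def
    proof (rule sum.cong)
      fix i assume i: "i \<in> {1..n}"
      have "zs i * d i * zs i = (d i * zs i) * zs i" by (simp add: ac_simps)
      also have "\<dots> = w i * zs i" using zsd[OF i] by simp
      finally show "zs i * d i * zs i = v i * zs i - lam * (c i * zs i) + mu * (unitv n i * zs i)"
        by (simp add: w_def algebra_simps)
    qed simp
    also have "\<dots> = dotp n v zs - lam * dotp n c zs + mu * dotp n (unitv n) zs"
      by (simp add: dotp_def sum.distrib sum_subtractf sum_distrib_left)
    finally show ?thesis using key dot_unitv[OF n1] by simp
  qed
  have objval: "objf n d v zs = - 1/2 * dotp n v zs" by (simp add: objf_def quadzs)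
  have dualstar: "dualfun n d v c lam mu = objf n d v zs"
    using dualfun_eq[OF dpos] lagrzs objzs w_def by simp
  have dualstrict: "dualfun n d v c lam' mu' < dualfun n d v c lam mu"
    if "mu' \<ge> 0" "(lam', mu') \<noteq> (lam, mu)" for lam' mu'
  proof -
    define w' where "w' = (\<lambda>i. v i - lam'*c i + mu'*unitv n i)"
    have L': "lagr n d v c zs lam' mu' = -1/2 * quadDinv n d w' w' + 1/2 * quadD n d
        (\<lambda>i. zs i - (if i \<in> {1..n} then w' i / d i else 0)) (\<lambda>i. zs i - (if i \<in> {1..n} then w' i / d i else 0))"
      unfolding lagr_eq w'_def[symmetric] using complete_sq[OF dpos] by simp
    have "\<exists>i\<in>{1..n}. zs i \<noteq> w' i / d i"
    proof (rule ccontr)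
      assume H: "\<not> (\<exists>i\<in>{1..n}. zs i \<noteq> w' i / d i)"
      have eq: "w i = w' i" if i: "i \<in> {1..n}" for i
      proof -
        have "zs i = w' i / d i" using H i by auto
        moreover have "d i > 0" using dpos i by blast
        ultimately show ?thesis using zsd[OF i] by simp
      qed
      have "lam * c i0 = lam' * c i0" using eq[OF i0R] i0n by (simp add: w_def w'_def unitv_def)
      then have "lam = lam'" using i0 by simp
      moreover have "mu = mu'" using eq[of n] n1 \<open>lam = lam'\<close> by (simp add: w_def w'_def unitv_def)
      ultimately show False using that by simp
    qed
    then obtain i where i: "i \<in> {1..n}" "zs i \<noteq> w' i / d i" by blast
    have "quadD n d (\<lambda>i. zs i - (if i \<in> {1..n} then w' i / d i else 0)) (\<lambda>i. zs i - (if i \<in> {1..n} then w' i / d i else 0)) > 0"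
      by (rule quadD_pos[OF dpos i(1)]) (use i in simp)
    moreover have "lagr n d v c zs lam' mu' \<le> objf n d v zs"
      using objL[of zs] key that mu0 dn n1 dot_unitv[OF n1] by (simp add: lagr_def)
    ultimately have "-1/2 * quadDinv n d w' w' < objf n d v zs" using L' by simp
    then show ?thesis using dualfun_eq[OF dpos, of v c lam' mu'] dualstar w'_def by simp
  qed
  have dv: "dual_value n d v c = objf n d v zs"
    unfolding dual_value_def
  proof (rule cSup_eq_maximum)
    show "objf n d v zs \<in> (\<lambda>p. dualfun n d v c (fst p) (snd p)) ` {p. 0 \<le> snd p}"
      using mu0 dualstar by (auto intro!: image_eqI[where x="(lam,mu)"])
    fix x assume "x \<in> (\<lambda>p. dualfun n d v c (fst p) (snd p)) ` {p. 0 \<le> snd p}"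
    then obtain l m where "m \<ge> 0" "x = dualfun n d v c l m" by auto
    then show "x \<le> objf n d v zs" using dualstrict[of m l] dualstar
      by (cases "(l, m) = (lam, mu)") force+
  qed
  have fin: "finite (d ` {1..n})" "d ` {1..n} \<noteq> {}" using n1 by auto
  have dminle: "dmin \<le> d i" if "i \<in> {1..n}" for i unfolding dmin_def using fin that by simp
  have dmaxge: "d i \<le> dmax" if "i \<in> {1..n}" for i unfolding dmax_def using fin that by simp
  have dminpos: "dmin > 0" unfolding dmin_def using Min_in[OF fin] dpos by auto
  have dmaxpos: "dmax > 0" using dmaxge[of n] dn n1 by simp
  define Nz where "Nz = vnorm n zs"
  define Nv where "Nv = vnorm n v"
  have Nz0: "Nz \<ge> 0" "Nv \<ge> 0" by (simp_all add: Nz_def Nv_def vnorm_L2)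
  have Nzsq: "Nz * Nz = dotp n zs zs"
    unfolding Nz_def vnorm_def dotp_def by (simp add: sum_nonneg)
  have "dmin * dotp n zs zs \<le> quadD n d zs zs"
    unfolding dotp_def quadD_def sum_distrib_left
  proof (rule sum_mono)
    fix i assume i: "i \<in> {1..n}"
    have "dmin * (zs i * zs i) \<le> d i * (zs i * zs i)"
      by (rule mult_right_mono) (use dminle[OF i] in simp_all)
    then show "dmin * (zs i * zs i) \<le> zs i * d i * zs i" by (simp add: ac_simps)
  qed
  also have "\<dots> = dotp n v zs" by (rule quadzs)
  also have "\<dots> \<le> (\<Sum>i\<in>{1..n}. \<bar>v i\<bar> * \<bar>zs i\<bar>)"
    unfolding dotp_def by (rule sum_mono) (simp add: abs_mult[symmetric])
  also have "\<dots> \<le> Nv * Nz" unfolding Nv_def Nz_def vnorm_L2 by (rule L2_set_mult_ineq)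
  finally have ineq: "dmin * (Nz * Nz) \<le> Nv * Nz" using Nzsq by simp
  have normz: "Nz \<le> Nv / dmin"
  proof (cases "Nz = 0")
    case True then show ?thesis using Nz0 dminpos by simp
  next
    case False
    then have "dmin * Nz \<le> Nv" using ineq Nz0 by (simp add: mult.assoc[symmetric] mult_le_cancel_right)
    then show ?thesis using dminpos by (simp add: pos_le_divide_eq mult.commute)
  qed
  have normu: "vnorm n (\<lambda>i. lam * c i - mu * unitv n i) \<le> (1 + dmax / dmin) * vnorm n v"
  proof -
    have "vnorm n (\<lambda>i. lam * c i - mu * unitv n i) = L2_set (\<lambda>i. v i + (- (d i * zs i))) {1..n}"
      unfolding vnorm_L2 by (rule L2_set_cong) (auto simp: zsd w_def)
    also have "\<dots> \<le> Nv + L2_set (\<lambda>i. - (d i * zs i)) {1..n}"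
      unfolding Nv_def vnorm_L2 by (rule L2_set_triangle_ineq)
    also have "L2_set (\<lambda>i. - (d i * zs i)) {1..n} = L2_set (\<lambda>i. \<bar>d i * zs i\<bar>) {1..n}"
      by (simp add: L2_set_def)
    also have "\<dots> \<le> L2_set (\<lambda>i. dmax * \<bar>zs i\<bar>) {1..n}"
    proof (rule L2_set_mono)
      fix i assume i: "i \<in> {1..n}"
      have "d i > 0" using dpos i by blast
      then have "\<bar>d i\<bar> \<le> dmax" using dmaxge[OF i] by simp
      then show "\<bar>d i * zs i\<bar> \<le> dmax * \<bar>zs i\<bar>"
        by (simp add: abs_mult mult_right_mono)
    qed simp
    also have "\<dots> = dmax * Nz" unfolding Nz_def vnorm_L2
      using L2_set_right_distrib[of dmax "\<lambda>i. \<bar>zs i\<bar>" "{1..n}"] dmaxpos by (simp add: L2_set_def)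
    also have "dmax * Nz \<le> dmax * (Nv / dmin)" using normz dmaxpos by (intro mult_left_mono) simp_all
    finally show ?thesis using dminpos by (simp add: Nv_def field_simps)
  qed
  have A: "zs \<in> feasible n c \<and> (\<forall>z\<in>feasible n c. z \<noteq> zs \<longrightarrow> objf n d v zs < objf n d v z) \<and>
      vnorm n zs \<le> vnorm n v / dmin"
    using zsF primstrict normz unfolding Nz_def Nv_def by blast
  have B: "\<forall>lam' mu'. dualfun n d v c lam' mu' =
          - 1/2 * quadDinv n d (\<lambda>i. v i - lam' * c i + mu' * unitv n i)
                               (\<lambda>i. v i - lam' * c i + mu' * unitv n i)"
    using dualfun_eq[OF dpos] by simp
  have C: "mu \<ge> 0 \<and>
        (\<forall>lam' mu'. mu' \<ge> 0 \<and> (lam', mu') \<noteq> (lam, mu) \<longrightarrow>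
           dualfun n d v c lam' mu' < dualfun n d v c lam mu) \<and>
        vnorm n (\<lambda>i. lam * c i - mu * unitv n i) \<le> (1 + dmax / dmin) * vnorm n v"
    using mu0 dualstrict normu by blast
  have F: "zs \<in> Rn n \<and> (\<forall>z\<in>Rn n. z \<noteq> zs \<longrightarrow> lagr n d v c zs lam mu < lagr n d v c z lam mu)"
    using zsR strictL by blast
  show ?thesis
    using A B C F key mu0 pv dv objval dualstar by simp
qed

end
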